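(* Let $n\in\mathbb{N}$ and let $T\subseteq\mathbb{F}_2^n$ (with $\mathbb{F}_2=\{0,1\}$). Let $C$ be the $n$-qubit projector $C=\sum_{z\in T}|z\rangle\langle z|$ onto the span of the computational basis states indexed by $T$, let $X=\sum_{j=1}^n\sigma^x_j$ where $\sigma^x_j$ is the Pauli-$X$ operator on qubit $j$, and for real angles $\beta,\gamma$ define $$|\beta,\gamma\rangle_1=e^{-i\beta X}e^{-i\gamma C}|+\rangle^{\otimes n},\qquad F_1(\beta,\gamma)=\langle\beta,\gamma|_1\,C\,|\beta,\gamma\rangle_1 .$$ Then $$F_1(\beta,\gamma)=\frac{1}{2^n}\sum_{k\in T}|c_k(\beta,\gamma)|^2,$$ where $$c_k(\beta,\gamma)=\sum_{d=0}^n\left(\#_d(k)\,(e^{-i\gamma}-1)+\binom{n}{d}\right)f_n(\beta,d),$$ with $\#_d(k)=|\{z\in T: d_H(z,k)=d\}|$, $f_n(\beta,d)=(\cos\beta)^{n-d}(-i\sin\beta)^d$, and $d_H$ the Hamming distance between bit strings.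
   Context: $T$ is the target space (set of bit strings encoding solutions of a decision problem instance); $|z\rangle$ for $z\in\mathbb{F}_2^n$ is the corresponding computational basis state, and $|+\rangle=(|0\rangle+|1\rangle)/\sqrt2$. *)

theory Defs
  imports Complex_Main
begin

text \<open>Bit strings of length n (elements of F_2^n) are boolean lists of length n.
  n-qubit state vectors are functions from bit strings to complex amplitudes
  (computational basis coordinates); n-qubit operators are matrices indexed by
  pairs of bit strings.\<close>

definition bits :: "nat \<Rightarrow> bool list set" where
  "bits n = {xs. length xs = n}"

definition hamming :: "bool list \<Rightarrow> bool list \<Rightarrow> nat" where
  "hamming x y = card {j. j < length x \<and> x ! j \<noteq> y ! j}"

type_synonym qstate = "bool list \<Rightarrow> complex"
type_synonym qop = "bool list \<Rightarrow> bool list \<Rightarrow> complex"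

definition mmul :: "nat \<Rightarrow> qop \<Rightarrow> qop \<Rightarrow> qop" where
  "mmul n A B = (\<lambda>z w. \<Sum>y\<in>bits n. A z y * B y w)"

definition mid :: "nat \<Rightarrow> qop" where
  "mid n = (\<lambda>z w. if z = w \<and> z \<in> bits n then 1 else 0)"

primrec mpow :: "nat \<Rightarrow> qop \<Rightarrow> nat \<Rightarrow> qop" where
  "mpow n A 0 = mid n"
| "mpow n A (Suc m) = mmul n A (mpow n A m)"

definition mscale :: "complex \<Rightarrow> qop \<Rightarrow> qop" where
  "mscale c A = (\<lambda>z w. c * A z w)"

definition mexp :: "nat \<Rightarrow> qop \<Rightarrow> qop" where
  "mexp n A = (\<lambda>z w. \<Sum>m. mpow n A m z w / fact m)"

definition mapply :: "nat \<Rightarrow> qop \<Rightarrow> qstate \<Rightarrow> qstate" where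
  "mapply n A v = (\<lambda>z. \<Sum>w\<in>bits n. A z w * v w)"

definition inner_q :: "nat \<Rightarrow> qstate \<Rightarrow> qstate \<Rightarrow> complex" where
  "inner_q n u v = (\<Sum>z\<in>bits n. cnj (u z) * v z)"

text \<open>Pauli-X on qubit j (0-based, j < n): flips bit j.\<close>
definition sigma_x :: "nat \<Rightarrow> nat \<Rightarrow> qop" where
  "sigma_x n j = (\<lambda>z w. if z \<in> bits n \<and> w \<in> bits n \<and> w = z[j := \<not> z ! j] then 1 else 0)"

definition Xop :: "nat \<Rightarrow> qop" where
  "Xop n = (\<lambda>z w. \<Sum>j<n. sigma_x n j z w)"

definition Cop :: "bool list set \<Rightarrow> qop" where
  "Cop T = (\<lambda>z w. if z = w \<and> z \<in> T then 1 else 0)"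

definition plus_state :: "nat \<Rightarrow> qstate" where
  "plus_state n = (\<lambda>z. if z \<in> bits n then complex_of_real (1 / sqrt (2 ^ n)) else 0)"

definition qaoa1_state :: "nat \<Rightarrow> bool list set \<Rightarrow> real \<Rightarrow> real \<Rightarrow> qstate" where
  "qaoa1_state n T \<beta> \<gamma> =
     mapply n (mexp n (mscale (- \<i> * complex_of_real \<beta>) (Xop n)))
       (mapply n (mexp n (mscale (- \<i> * complex_of_real \<gamma>) (Cop T))) (plus_state n))"

definition F1 :: "nat \<Rightarrow> bool list set \<Rightarrow> real \<Rightarrow> real \<Rightarrow> complex" where
  "F1 n T \<beta> \<gamma> = inner_q n (qaoa1_state n T \<beta> \<gamma>) (mapply n (Cop T) (qaoa1_state n T \<beta> \<gamma>))"

definition count_d :: "bool list set \<Rightarrow> nat \<Rightarrow> bool list \<Rightarrow> nat" where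
  "count_d T d k = card {z \<in> T. hamming z k = d}"

definition f_n :: "nat \<Rightarrow> real \<Rightarrow> nat \<Rightarrow> complex" where
  "f_n n \<beta> d = complex_of_real (cos \<beta>) ^ (n - d) * (- \<i> * complex_of_real (sin \<beta>)) ^ d"

definition c_k :: "nat \<Rightarrow> bool list set \<Rightarrow> real \<Rightarrow> real \<Rightarrow> bool list \<Rightarrow> complex" where
  "c_k n T \<beta> \<gamma> k = (\<Sum>d=0..n. (of_nat (count_d T d k) * (exp (- \<i> * complex_of_real \<gamma>) - 1)
                                   + of_nat (n choose d)) * f_n n \<beta> d)"

end

theory Submission
  imports Defs
begin

lemma exp_sums_c: "(\<lambda>m. (x::complex)^m / fact m) sums exp x"
  using exp_converges[of x] by (simp add: scaleR_conv_of_real divide_inverse mult.commute)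

lemma bits_0: "bits 0 = {[]}" by (auto simp: bits_def)

lemma bits_Suc: "bits (Suc n) = (\<lambda>(s,b). s @ [b]) ` (bits n \<times> UNIV)"
proof
  show "bits (Suc n) \<subseteq> (\<lambda>(s,b). s @ [b]) ` (bits n \<times> UNIV)"
  proof
    fix xs assume "xs \<in> bits (Suc n)"
    then have l: "length xs = Suc n" by (simp add: bits_def)
    then have ne: "xs \<noteq> []" by auto
    have "xs = (\<lambda>(s,b). s @ [b]) (butlast xs, last xs)"
      using ne by simp
    moreover have "(butlast xs, last xs) \<in> bits n \<times> UNIV"
      using l by (simp add: bits_def)
    ultimately show "xs \<in> (\<lambda>(s,b). s @ [b]) ` (bits n \<times> UNIV)" by (rule image_eqI)
  qed
  show "(\<lambda>(s,b). s @ [b]) ` (bits n \<times> UNIV) \<subseteq> bits (Suc n)"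
    by (auto simp: bits_def)
qed

lemma finite_bits: "finite (bits n)"
  by (induction n) (auto simp: bits_0 bits_Suc)

lemma sum_prod_bits:
  fixes g :: "nat \<Rightarrow> bool \<Rightarrow> 'a::comm_semiring_1"
  shows "(\<Sum>s\<in>bits n. \<Prod>i<n. g i (s!i)) = (\<Prod>i<n. g i False + g i True)"
proof (induction n arbitrary: g)
  case 0
  then show ?case by (simp add: bits_0)
next
  case (Suc n)
  have inj: "inj_on (\<lambda>(s,b). s @ [b]) (bits n \<times> (UNIV::bool set))"
    by (auto simp: inj_on_def)
  have "(\<Sum>s\<in>bits (Suc n). \<Prod>i<Suc n. g i (s!i))
      = (\<Sum>p\<in>bits n \<times> (UNIV::bool set). \<Prod>i<Suc n. g i ((fst p @ [snd p])!i))"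
    unfolding bits_Suc by (subst sum.reindex[OF inj]) (simp add: case_prod_beta)
  also have "\<dots> = (\<Sum>s\<in>bits n. \<Sum>b\<in>(UNIV::bool set). \<Prod>i<Suc n. g i ((s @ [b])!i))"
    by (simp add: sum.cartesian_product case_prod_beta)
  also have "\<dots> = (\<Sum>s\<in>bits n. \<Sum>b\<in>(UNIV::bool set). (\<Prod>i<n. g i (s!i)) * g n b)"
    by (rule sum.cong[OF refl], rule sum.cong[OF refl])
       (auto simp: bits_def nth_append intro!: prod.cong)
  also have "\<dots> = (\<Sum>s\<in>bits n. \<Prod>i<n. g i (s!i)) * (g n False + g n True)"
    by (simp add: UNIV_bool sum_distrib_right distrib_left sum.distrib)
  finally show ?case using Suc by simp
qed

definition chi :: "nat \<Rightarrow> bool list \<Rightarrow> bool list \<Rightarrow> bool list \<Rightarrow> complex" where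
  "chi n s z w = (\<Prod>i<n. if s!i \<and> z!i \<noteq> w!i then -1 else 1)"

definition lam :: "nat \<Rightarrow> bool list \<Rightarrow> complex" where
  "lam n s = (\<Sum>j<n. if s!j then -1 else 1)"

lemma chi_flip:
  assumes "j < n" "length z = n"
  shows "chi n s (z[j := \<not> z!j]) w = chi n s z w * (if s!j then -1 else 1)"
proof -
  define R where "R = (\<Prod>i\<in>{..<n}-{j}. if s!i \<and> z!i \<noteq> w!i then -1 else (1::complex))"
  have A: "chi n s (z[j := \<not> z!j]) w
      = (if s!j \<and> (\<not> z!j) \<noteq> w!j then -1 else 1) *
        (\<Prod>i\<in>{..<n}-{j}. if s!i \<and> z[j := \<not> z!j]!i \<noteq> w!i then -1 else 1)"
    unfolding chi_def using assms by (subst prod.remove[of _ j]) auto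
  have A2: "(\<Prod>i\<in>{..<n}-{j}. if s!i \<and> z[j := \<not> z!j]!i \<noteq> w!i then -1 else (1::complex)) = R"
    unfolding R_def by (rule prod.cong) auto
  have B: "chi n s z w = (if s!j \<and> z!j \<noteq> w!j then -1 else 1) * R"
    unfolding chi_def R_def using assms by (subst prod.remove[of _ j]) auto
  have C: "(if s!j \<and> (\<not> z!j) \<noteq> w!j then -1 else 1) = (if s!j \<and> z!j \<noteq> w!j then -1 else 1) * (if s!j then -1 else (1::complex))"
    by auto
  show ?thesis unfolding A A2 B C by (simp only: mult_ac)
qed

lemma sum_chi:
  assumes "z \<in> bits n" "w \<in> bits n"
  shows "(\<Sum>s\<in>bits n. chi n s z w) = (if z = w then 2^n else 0)"
proof -
  have "(\<Sum>s\<in>bits n. chi n s z w) = (\<Prod>i<n. (if z!i \<noteq> w!i then 0 else 2))"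
    unfolding chi_def
    by (subst sum_prod_bits[of "\<lambda>i b. if b \<and> z!i \<noteq> w!i then -1 else 1"]) (auto intro!: prod.cong)
  also have "\<dots> = (if z = w then 2^n else 0)"
  proof (cases "z = w")
    case True then show ?thesis by simp
  next
    case False
    then obtain i where "i < n" "z!i \<noteq> w!i" using assms by (auto simp: bits_def list_eq_iff_nth_eq)
    then show ?thesis using False by (auto intro: prod_zero)
  qed
  finally show ?thesis .
qed

lemma sigma_x_eq:
  assumes "z \<in> bits n" "y \<in> bits n"
  shows "sigma_x n j z y = (if z[j := \<not> z!j] = y then 1 else 0)"
  using assms by (auto simp: sigma_x_def)

lemma flip_bits: "z \<in> bits n \<Longrightarrow> z[j := b] \<in> bits n"
  by (simp add: bits_def)

lemma Xpow:
  assumes "z \<in> bits n" "w \<in> bits n"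
  shows "mpow n (mscale a (Xop n)) m z w = (\<Sum>s\<in>bits n. chi n s z w * (a * lam n s)^m) / 2^n"
  using assms(1)
proof (induction m arbitrary: z)
  case 0
  then show ?case using assms sum_chi[of z n w] by (simp add: mid_def)
next
  case (Suc m)
  let ?P = "mpow n (mscale a (Xop n)) m"
  have "mpow n (mscale a (Xop n)) (Suc m) z w = (\<Sum>y\<in>bits n. (a * (\<Sum>j<n. sigma_x n j z y)) * ?P y w)"
    by (simp add: mmul_def mscale_def Xop_def)
  also have "\<dots> = a * (\<Sum>j<n. \<Sum>y\<in>bits n. sigma_x n j z y * ?P y w)"
    by (subst sum.swap) (simp add: sum_distrib_left sum_distrib_right mult.assoc)
  also have "\<dots> = a * (\<Sum>j<n. ?P (z[j := \<not> z!j]) w)"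
  proof -
    have "(\<Sum>y\<in>bits n. sigma_x n j z y * ?P y w) = ?P (z[j := \<not> z!j]) w" for j
    proof -
      have "(\<Sum>y\<in>bits n. sigma_x n j z y * ?P y w) = (\<Sum>y\<in>bits n. if z[j := \<not> z!j] = y then ?P y w else 0)"
        by (rule sum.cong) (auto simp: sigma_x_eq Suc.prems)
      then show ?thesis by (simp add: finite_bits flip_bits Suc.prems)
    qed
    then show ?thesis by simp
  qed
  also have "\<dots> = a * (\<Sum>j<n. (\<Sum>s\<in>bits n. chi n s z w * (a * lam n s)^m * (if s!j then -1 else 1)) / 2^n)"
  proof (rule arg_cong[where f="\<lambda>x. a*x"], rule sum.cong[OF refl])
    fix j assume j: "j \<in> {..<n}"
    have zb: "z[j := \<not> z!j] \<in> bits n" using Suc.prems by (rule flip_bits)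
    show "?P (z[j := \<not> z!j]) w = (\<Sum>s\<in>bits n. chi n s z w * (a * lam n s)^m * (if s!j then -1 else 1)) / 2^n"
      unfolding Suc.IH[OF zb]
      apply (rule arg_cong[where f="\<lambda>x. x / 2^n"], rule sum.cong[OF refl])
    proof -
      fix s
      have "length z = n" using Suc.prems by (simp add: bits_def)
      then have "chi n s (z[j := \<not> z!j]) w = chi n s z w * (if s!j then -1 else 1)"
        using j by (intro chi_flip) auto
      then show "chi n s (z[j := \<not> z!j]) w * (a * lam n s)^m = chi n s z w * (a * lam n s)^m * (if s!j then -1 else 1)"
        by (simp only: mult_ac)
    qed
  qed
  also have "\<dots> = a * (\<Sum>s\<in>bits n. \<Sum>j<n. chi n s z w * (a * lam n s)^m * (if s!j then -1 else 1)) / 2^n"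
  proof -
    have "(\<Sum>j<n. (\<Sum>s\<in>bits n. chi n s z w * (a * lam n s)^m * (if s!j then -1 else 1)) / 2^n)
        = (\<Sum>s\<in>bits n. \<Sum>j<n. chi n s z w * (a * lam n s)^m * (if s!j then -1 else 1)) / 2^n"
      by (simp only: sum_divide_distrib[symmetric] sum.swap[of _ "{..<n}" "bits n"])
    then show ?thesis by simp
  qed
  also have "\<dots> = (\<Sum>s\<in>bits n. chi n s z w * (a * lam n s)^m * (a * lam n s)) / 2^n"
  proof -
    have "(\<Sum>j<n. chi n s z w * (a * lam n s)^m * (if s!j then -1 else 1)) = chi n s z w * (a * lam n s)^m * lam n s" for s
      by (simp add: lam_def sum_distrib_left)
    then show ?thesis by (simp add: sum_distrib_left mult_ac)
  qed
  also have "\<dots> = (\<Sum>s\<in>bits n. chi n s z w * (a * lam n s)^Suc m) / 2^n"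
    by (simp only: power_Suc2 mult.assoc)
  finally show ?case .
qed

lemma Xexp:
  assumes "z \<in> bits n" "w \<in> bits n"
  shows "mexp n (mscale a (Xop n)) z w = (\<Sum>s\<in>bits n. chi n s z w * exp (a * lam n s)) / 2^n"
proof -
  have "(\<lambda>m. (\<Sum>s\<in>bits n. chi n s z w * ((a * lam n s)^m / fact m)) / 2^n) sums
        ((\<Sum>s\<in>bits n. chi n s z w * exp (a * lam n s)) / 2^n)"
    by (intro sums_divide sums_sum sums_mult exp_sums_c)
  moreover have "(\<lambda>m. mpow n (mscale a (Xop n)) m z w / fact m)
      = (\<lambda>m. (\<Sum>s\<in>bits n. chi n s z w * ((a * lam n s)^m / fact m)) / 2^n)"
    by (rule ext) (simp add: Xpow[OF assms] sum_divide_distrib[symmetric] sum_distrib_left mult.assoc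
          divide_inverse mult_ac)
  ultimately show ?thesis unfolding mexp_def by (simp add: sums_iff)
qed

lemma exp_minus_i: "exp (- \<i> * complex_of_real b) = complex_of_real (cos b) - \<i> * complex_of_real (sin b)"
proof -
  have "exp (- \<i> * complex_of_real b) = cis (- b)"
    by (simp add: cis_conv_exp)
  then show ?thesis by (simp add: complex_eq_iff)
qed

lemma exp_plus_i: "exp (\<i> * complex_of_real b) = complex_of_real (cos b) + \<i> * complex_of_real (sin b)"
proof -
  have "exp (\<i> * complex_of_real b) = cis b"
    by (simp add: cis_conv_exp)
  then show ?thesis by (simp add: complex_eq_iff)
qed

lemma prod_half:
  fixes h :: "nat \<Rightarrow> complex"
  shows "(\<Prod>i<n. h i) / 2^n = (\<Prod>i<n. h i / 2)"
  by (induction n) (auto simp: field_simps)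

lemma Xexp_prod:
  assumes "z \<in> bits n" "w \<in> bits n"
  shows "mexp n (mscale (- \<i> * complex_of_real b) (Xop n)) z w
       = (\<Prod>i<n. if z!i = w!i then complex_of_real (cos b) else - \<i> * complex_of_real (sin b))"
proof -
  define a where "a = - \<i> * complex_of_real b"
  define g where "g = (\<lambda>i bb. (if bb \<and> z!i \<noteq> w!i then -1 else 1) * (if bb then exp (-a) else exp a) :: complex)"
  have 2: "chi n s z w * exp (a * lam n s) = (\<Prod>i<n. g i (s!i))" for s
  proof -
    have "exp (a * lam n s) = (\<Prod>j<n. exp (a * (if s!j then -1 else 1)))"
      unfolding lam_def sum_distrib_left by (simp add: exp_sum)
    also have "\<dots> = (\<Prod>j<n. (if s!j then exp (-a) else exp a))"
      by (rule prod.cong) auto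
    finally show ?thesis unfolding chi_def g_def by (simp add: prod.distrib)
  qed
  have "mexp n (mscale a (Xop n)) z w = (\<Sum>s\<in>bits n. \<Prod>i<n. g i (s!i)) / 2^n"
    using Xexp[OF assms] 2 by simp
  also have "\<dots> = (\<Prod>i<n. g i False + g i True) / 2^n"
    by (simp only: sum_prod_bits)
  also have "\<dots> = (\<Prod>i<n. (g i False + g i True) / 2)"
    by (rule prod_half)
  also have "\<dots> = (\<Prod>i<n. if z!i = w!i then complex_of_real (cos b) else - \<i> * complex_of_real (sin b))"
  proof (rule prod.cong[OF refl])
    fix i
    have e1: "exp a = complex_of_real (cos b) - \<i> * complex_of_real (sin b)"
      unfolding a_def by (rule exp_minus_i)
    have e2: "exp (-a) = complex_of_real (cos b) + \<i> * complex_of_real (sin b)"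
      unfolding a_def using exp_plus_i[of b] by simp
    show "(g i False + g i True) / 2 = (if z!i = w!i then complex_of_real (cos b) else - \<i> * complex_of_real (sin b))"
      unfolding g_def e1 e2 by (simp add: field_simps)
  qed
  finally show ?thesis unfolding a_def .
qed

lemma Cpow:
  assumes "T \<subseteq> bits n"
  shows "mpow n (mscale a (Cop T)) m z w = (if z = w \<and> z \<in> bits n then (if z \<in> T then a else 0)^m else 0)"
proof (induction m)
  case 0
  then show ?case by (auto simp: mid_def)
next
  case (Suc m)
  have "mpow n (mscale a (Cop T)) (Suc m) z w
      = (\<Sum>y\<in>bits n. (if y = z then (if z \<in> T then a else 0) * mpow n (mscale a (Cop T)) m y w else 0))"
    unfolding mpow.simps mmul_def mscale_def Cop_def by (rule sum.cong) auto
  also have "\<dots> = (if z \<in> bits n then (if z \<in> T then a else 0) * mpow n (mscale a (Cop T)) m z w else 0)"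
    by (simp add: finite_bits)
  finally show ?case using Suc assms by auto
qed

lemma Cexp:
  assumes "T \<subseteq> bits n"
  shows "mexp n (mscale a (Cop T)) z w = (if z = w \<and> z \<in> bits n then exp (if z \<in> T then a else 0) else 0)"
proof (cases "z = w \<and> z \<in> bits n")
  case True
  then show ?thesis unfolding mexp_def Cpow[OF assms]
    using exp_sums_c[of "if z \<in> T then a else 0"] by (simp add: sums_iff)
next
  case False
  then show ?thesis unfolding mexp_def Cpow[OF assms] by (simp only: if_not_P[OF False]) simp
qed

lemma hamming_sym: "length a = length b \<Longrightarrow> hamming a b = hamming b a"
  unfolding hamming_def by (rule arg_cong[where f=card]) auto

lemma P_eq:
  fixes c s :: complex
  assumes "length k = n" "length w = n"
  shows "(\<Prod>i<n. if k!i = w!i then c else s) = c^(n - hamming k w) * s^(hamming k w)"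
proof -
  define D where "D = {j. j < length k \<and> k!j \<noteq> w!j}"
  have Dsub: "D \<subseteq> {..<n}" using assms by (auto simp: D_def)
  have fD: "finite D" using Dsub finite_subset by blast
  have "(\<Prod>i<n. if k!i = w!i then c else s)
      = (\<Prod>i\<in>{..<n} \<inter> {i. k!i = w!i}. c) * (\<Prod>i\<in>{..<n} \<inter> - {i. k!i = w!i}. s)"
    by (rule prod.If_cases) simp
  also have "{..<n} \<inter> - {i. k!i = w!i} = D" using assms by (auto simp: D_def)
  also have "{..<n} \<inter> {i. k!i = w!i} = {..<n} - D" using assms by (auto simp: D_def)
  finally have "(\<Prod>i<n. if k!i = w!i then c else s) = (\<Prod>i\<in>{..<n} - D. c) * (\<Prod>i\<in>D. s)" .
  moreover have "card ({..<n} - D) = n - card D" using card_Diff_subset[OF fD Dsub] by simp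
  ultimately show ?thesis by (simp add: hamming_def D_def)
qed

lemma psi_sum:
  assumes T: "T \<subseteq> bits n" and k: "k \<in> bits n"
  shows "(\<Sum>w\<in>bits n. (\<Prod>i<n. if k!i = w!i then complex_of_real (cos b) else - \<i> * complex_of_real (sin b))
            * (if w \<in> T then exp (- \<i> * complex_of_real g) else 1)) = c_k n T b g k"
proof -
  define C where "C = complex_of_real (cos b)"
  define S where "S = - \<i> * complex_of_real (sin b)"
  define E where "E = exp (- \<i> * complex_of_real g)"
  define P where "P = (\<lambda>w. (\<Prod>i<n. if k!i = w!i then C else S))"
  have fT: "finite T" using T finite_bits finite_subset by blast
  have fn: "\<And>d. f_n n b d = C^(n-d) * S^d" by (simp add: f_n_def C_def S_def)
  have Pw: "w \<in> bits n \<Longrightarrow> P w = f_n n b (hamming w k)" for w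
  proof -
    assume w: "w \<in> bits n"
    have "hamming w k = hamming k w" using w k by (intro hamming_sym) (auto simp: bits_def)
    then show ?thesis unfolding P_def fn using w k by (simp add: bits_def P_eq)
  qed
  have 1: "(\<Sum>w\<in>bits n. P w * (if w \<in> T then E else 1))
      = (\<Sum>w\<in>bits n. P w) + (E - 1) * (\<Sum>w\<in>T. P w)"
  proof -
    have "(\<Sum>w\<in>bits n. P w * (if w \<in> T then E else 1))
        = (\<Sum>w\<in>bits n. P w + (if w \<in> T then (E - 1) * P w else 0))"
      by (rule sum.cong) (auto simp: algebra_simps)
    also have "\<dots> = (\<Sum>w\<in>bits n. P w) + (\<Sum>w\<in>bits n \<inter> T. (E - 1) * P w)"
      by (simp add: sum.distrib sum.inter_restrict finite_bits)
    also have "bits n \<inter> T = T" using T by blast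
    finally show ?thesis by (simp add: sum_distrib_left)
  qed
  have 2: "(\<Sum>w\<in>bits n. P w) = (\<Sum>d=0..n. of_nat (n choose d) * f_n n b d)"
  proof -
    have "(\<Sum>w\<in>bits n. P w) = (\<Prod>i<n. (if k!i = False then C else S) + (if k!i = True then C else S))"
      unfolding P_def by (rule sum_prod_bits)
    also have "\<dots> = (\<Prod>i<n. S + C)" by (rule prod.cong) auto
    also have "\<dots> = (S + C)^n" by simp
    also have "\<dots> = (\<Sum>d=0..n. of_nat (n choose d) * f_n n b d)"
      unfolding binomial_ring atLeast0AtMost fn by (simp add: mult_ac)
    finally show ?thesis .
  qed
  have 3: "(\<Sum>w\<in>T. P w) = (\<Sum>d=0..n. of_nat (count_d T d k) * f_n n b d)"
  proof -
    have "(\<Sum>w\<in>T. P w) = (\<Sum>w\<in>T. f_n n b (hamming w k))"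
      using T Pw by (intro sum.cong) auto
    also have "\<dots> = (\<Sum>d\<in>{0..n}. \<Sum>w\<in>{x. x \<in> T \<and> hamming x k = d}. f_n n b (hamming w k))"
    proof (rule sum.group[symmetric, OF fT])
      show "finite {0..n}" by simp
      show "(\<lambda>w. hamming w k) ` T \<subseteq> {0..n}"
      proof
        fix d assume "d \<in> (\<lambda>w. hamming w k) ` T"
        then obtain w where w: "w \<in> T" "d = hamming w k" by auto
        have "{j. j < length w \<and> w!j \<noteq> k!j} \<subseteq> {..<length w}" by auto
        then have "hamming w k \<le> length w" unfolding hamming_def
          by (metis card_lessThan card_mono finite_lessThan)
        then show "d \<in> {0..n}" using w T by (auto simp: bits_def)
      qed
    qed
    also have "\<dots> = (\<Sum>d=0..n. of_nat (count_d T d k) * f_n n b d)"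
      by (rule sum.cong[OF refl]) (simp add: count_d_def)
    finally show ?thesis .
  qed
  have "c_k n T b g k = (E - 1) * (\<Sum>d=0..n. of_nat (count_d T d k) * f_n n b d)
        + (\<Sum>d=0..n. of_nat (n choose d) * f_n n b d)"
  proof -
    have "c_k n T b g k = (\<Sum>d=0..n. (E - 1) * (of_nat (count_d T d k) * f_n n b d) + of_nat (n choose d) * f_n n b d)"
      unfolding c_k_def E_def by (rule sum.cong) (auto simp: algebra_simps)
    then show ?thesis by (simp add: sum.distrib sum_distrib_left)
  qed
  then show ?thesis using 1 2 3 unfolding P_def C_def S_def E_def by simp
qed

theorem lemma2:
  fixes n :: nat and T :: "bool list set" and \<beta> \<gamma> :: real
  assumes "T \<subseteq> bits n"
  shows "F1 n T \<beta> \<gamma> = complex_of_real ((1 / 2 ^ n) * (\<Sum>k\<in>T. (cmod (c_k n T \<beta> \<gamma> k))\<^sup>2))"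
proof -
  define r where "r = complex_of_real (1 / sqrt (2 ^ n))"
  define E where "E = exp (- \<i> * complex_of_real \<gamma>)"
  define V where "V = mapply n (mexp n (mscale (- \<i> * complex_of_real \<gamma>) (Cop T))) (plus_state n)"
  define \<psi> where "\<psi> = qaoa1_state n T \<beta> \<gamma>"
  have fT: "finite T" using assms finite_bits finite_subset by blast
  have V: "V w = (if w \<in> T then E else 1) * r" if w: "w \<in> bits n" for w
  proof -
    have "V w = (\<Sum>u\<in>bits n. if w = u then exp (if w \<in> T then - \<i> * complex_of_real \<gamma> else 0) * plus_state n u else 0)"
      unfolding V_def mapply_def Cexp[OF assms] by (rule sum.cong) (auto simp: w)
    also have "\<dots> = exp (if w \<in> T then - \<i> * complex_of_real \<gamma> else 0) * plus_state n w"
      using w by (simp add: finite_bits)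
    finally show ?thesis using w by (simp add: plus_state_def r_def E_def)
  qed
  have psi: "\<psi> k = r * c_k n T \<beta> \<gamma> k" if k: "k \<in> bits n" for k
  proof -
    have "\<psi> k = (\<Sum>w\<in>bits n. mexp n (mscale (- \<i> * complex_of_real \<beta>) (Xop n)) k w * V w)"
      unfolding \<psi>_def qaoa1_state_def V_def mapply_def[of n "mexp n (mscale (- \<i> * complex_of_real \<beta>) (Xop n))"]
      by simp
    also have "\<dots> = (\<Sum>w\<in>bits n. r * ((\<Prod>i<n. if k!i = w!i then complex_of_real (cos \<beta>) else - \<i> * complex_of_real (sin \<beta>))
            * (if w \<in> T then exp (- \<i> * complex_of_real \<gamma>) else 1)))"
    proof (rule sum.cong[OF refl])
      fix w assume w: "w \<in> bits n"
      show "mexp n (mscale (- \<i> * complex_of_real \<beta>) (Xop n)) k w * V w = r * ((\<Prod>i<n. if k!i = w!i then complex_of_real (cos \<beta>) else - \<i> * complex_of_real (sin \<beta>))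
            * (if w \<in> T then exp (- \<i> * complex_of_real \<gamma>) else 1))"
        unfolding Xexp_prod[OF k w] V[OF w] E_def by (simp only: mult_ac)
    qed
    also have "\<dots> = r * c_k n T \<beta> \<gamma> k"
      by (simp add: sum_distrib_left[symmetric] psi_sum[OF assms k])
    finally show ?thesis .
  qed
  have "F1 n T \<beta> \<gamma> = (\<Sum>z\<in>bits n. cnj (\<psi> z) * (if z \<in> T then \<psi> z else 0))"
  proof -
    have "mapply n (Cop T) \<psi> z = (if z \<in> T then \<psi> z else 0)" if z: "z \<in> bits n" for z
    proof -
      have "mapply n (Cop T) \<psi> z = (\<Sum>w\<in>bits n. if z = w then (if z \<in> T then \<psi> w else 0) else 0)"
        unfolding mapply_def Cop_def by (rule sum.cong) auto
      then show ?thesis using z by (simp add: finite_bits)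
    qed
    then show ?thesis unfolding F1_def \<psi>_def[symmetric] inner_q_def by (intro sum.cong) auto
  qed
  also have "\<dots> = (\<Sum>z\<in>bits n \<inter> T. cnj (\<psi> z) * \<psi> z)"
    by (simp add: sum.inter_restrict[symmetric] finite_bits if_distrib cong: if_cong)
  also have "bits n \<inter> T = T" using assms by blast
  also have "(\<Sum>z\<in>T. cnj (\<psi> z) * \<psi> z) = (\<Sum>z\<in>T. complex_of_real ((1 / 2 ^ n) * (cmod (c_k n T \<beta> \<gamma> z))\<^sup>2))"
  proof (rule sum.cong[OF refl])
    fix z assume "z \<in> T"
    then have z: "z \<in> bits n" using assms by blast
    have rr: "cnj r * r = complex_of_real (1 / 2 ^ n)"
    proof -
      have "cnj r * r = complex_of_real ((1/sqrt(2^n)) * (1/sqrt(2^n)))"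
        unfolding r_def by (simp only: complex_cnj_complex_of_real of_real_mult)
      also have "(1/sqrt(2^n)) * (1/sqrt(2^n)) = 1 / (sqrt (2^n) * sqrt (2^n) :: real)" by simp
      also have "sqrt (2^n) * sqrt (2^n) = (2^n :: real)" by (simp add: real_sqrt_mult_self)
      finally show ?thesis .
    qed
    have "cnj (\<psi> z) * \<psi> z = (cnj r * r) * (cnj (c_k n T \<beta> \<gamma> z) * c_k n T \<beta> \<gamma> z)"
      unfolding psi[OF z] by (simp add: mult_ac)
    also have "\<dots> = complex_of_real (1 / 2 ^ n) * complex_of_real ((cmod (c_k n T \<beta> \<gamma> z))\<^sup>2)"
      unfolding rr complex_norm_square by (simp add: mult_ac)
    finally show "cnj (\<psi> z) * \<psi> z = complex_of_real ((1 / 2 ^ n) * (cmod (c_k n T \<beta> \<gamma> z))\<^sup>2)"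
      by simp
  qed
  also have "\<dots> = complex_of_real ((1 / 2 ^ n) * (\<Sum>k\<in>T. (cmod (c_k n T \<beta> \<gamma> k))\<^sup>2))"
    by (simp add: sum_distrib_left)
  finally show ?thesis .
qed

end
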